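(* Let $\alpha,\beta\in\Bbbk^n$ and $\mathcal H=\mathcal H(\alpha,\beta,0)$, graded by path length. Then the total Hilbert series of $\mathcal H$ is $h^{\mathrm{tot}}_{\mathcal H}(t)=n(1-t)^{-2}(1-t^2)^{-1}$.
   Context: $\Bbbk$ is an algebraically closed field of characteristic zero. Fix $n\ge1$; indices are taken modulo $n$ and $Q_0=\{0,\dots,n-1\}$. Let $Q$ be the quiver with vertex set $Q_0$ and arrows $u_i:i\to i+1$ and $d_i:i+1\to i$ for each $i\in Q_0$. Paths are written left to right (target of each arrow equals source of the next), $e_i$ is the trivial path at $i$. For $\alpha,\beta\in\Bbbk^n$, $\mathcal H(\alpha,\beta,0)$ is $\Bbbk Q$ modulo the relations $d_{i-1}u_{i-1}u_i=\alpha_iu_id_iu_i+\beta_iu_iu_{i+1}d_{i+1}$ and $d_id_{i-1}u_{i-1}=\alpha_id_iu_id_i+\beta_iu_{i+1}d_{i+1}d_i$ for all $i\in Q_0$. It is $\mathbb N$-graded with $\deg u_i=\deg d_i=1$, $\deg e_i=0$. For a graded quotient $A=\Bbbk Q/I$, let $H_k\in M_n(\mathbb N)$ have $(i,j)$ entry $\dim_\Bbbk e_iA_ke_j$; the total Hilbert series $h_A^{\mathrm{tot}}(t)$ is the series whose coefficient of $t^k$ is the sum of the entries of $H_k$. *)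

theory Defs
  imports Main "HOL-Library.Function_Algebras" "HOL-Computational_Algebra.Polynomial"
    "HOL-Computational_Algebra.Formal_Power_Series"
begin

text \<open>Arrows of the double cyclic quiver with n vertices: U i = u_i : i -> i+1,
  D i = d_i : i+1 -> i (indices mod n).\<close>
datatype arr = U nat | D nat

definition src :: "nat \<Rightarrow> arr \<Rightarrow> nat" where
  "src n a = (case a of U i \<Rightarrow> i mod n | D i \<Rightarrow> (i + 1) mod n)"

definition tgt :: "nat \<Rightarrow> arr \<Rightarrow> nat" where
  "tgt n a = (case a of U i \<Rightarrow> (i + 1) mod n | D i \<Rightarrow> i mod n)"

definition arr_ok :: "nat \<Rightarrow> arr \<Rightarrow> bool" where
  "arr_ok n a = (case a of U i \<Rightarrow> i < n | D i \<Rightarrow> i < n)"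

text \<open>A path is a start vertex together with a list of arrows (written left to right,
  the target of each arrow is the source of the next). The trivial path e_v is (v, []).\<close>
fun walk :: "nat \<Rightarrow> nat \<Rightarrow> arr list \<Rightarrow> nat option" where
  "walk n v [] = Some v"
| "walk n v (a # as) = (if arr_ok n a \<and> src n a = v then walk n (tgt n a) as else None)"

definition is_path :: "nat \<Rightarrow> nat \<Rightarrow> arr list \<Rightarrow> nat \<Rightarrow> bool" where
  "is_path n i p j \<longleftrightarrow> i < n \<and> walk n i p = Some j"

text \<open>Elements of the path algebra kQ: functions on paths (coefficients); paths are the
  indicator functions.\<close>
type_synonym 'k kQ = "nat \<times> arr list \<Rightarrow> 'k"

definition pvec :: "nat \<times> arr list \<Rightarrow> 'k::field kQ" where
  "pvec w = (\<lambda>w'. if w' = w then 1 else 0)"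

definition scaleQ :: "'k::field \<Rightarrow> 'k kQ \<Rightarrow> 'k kQ" where
  "scaleQ c f = (\<lambda>w. c * f w)"

definition dimQ :: "'k::field kQ set \<Rightarrow> nat" where
  "dimQ S = vector_space.dim (scaleQ :: 'k \<Rightarrow> 'k kQ \<Rightarrow> 'k kQ) S"

text \<open>A homogeneous relation: start vertex, end vertex, and a list of
  (coefficient, path) terms, all paths going from the start to the end vertex.\<close>
type_synonym 'k rel = "nat \<times> nat \<times> ('k \<times> arr list) list"

definition pm :: "nat \<Rightarrow> nat \<Rightarrow> nat" where
  "pm n i = (i + n - 1) mod n"

definition ps :: "nat \<Rightarrow> nat \<Rightarrow> nat" where
  "ps n i = (i + 1) mod n"

definition relA :: "nat \<Rightarrow> (nat \<Rightarrow> 'k::field) \<Rightarrow> (nat \<Rightarrow> 'k) \<Rightarrow> nat \<Rightarrow> 'k rel" where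
  "relA n \<alpha> \<beta> i = (i, ps n i,
     [(1, [D (pm n i), U (pm n i), U i]),
      (- \<alpha> i, [U i, D i, U i]),
      (- \<beta> i, [U i, U (ps n i), D (ps n i)])])"

definition relB :: "nat \<Rightarrow> (nat \<Rightarrow> 'k::field) \<Rightarrow> (nat \<Rightarrow> 'k) \<Rightarrow> nat \<Rightarrow> 'k rel" where
  "relB n \<alpha> \<beta> i = (ps n i, i,
     [(1, [D i, D (pm n i), U (pm n i)]),
      (- \<alpha> i, [D i, U i, D i]),
      (- \<beta> i, [U (ps n i), D (ps n i), D i])])"

definition rels :: "nat \<Rightarrow> (nat \<Rightarrow> 'k::field) \<Rightarrow> (nat \<Rightarrow> 'k) \<Rightarrow> 'k rel set" where
  "rels n \<alpha> \<beta> = {relA n \<alpha> \<beta> i | i. i < n} \<union> {relB n \<alpha> \<beta> i | i. i < n}"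

text \<open>The product p * r * q of paths p = (i, ps) and q with a relation r, as an element of kQ
  (assuming composability).\<close>
definition sandwich :: "nat \<Rightarrow> arr list \<Rightarrow> ('k::field \<times> arr list) list \<Rightarrow> arr list \<Rightarrow> 'k kQ" where
  "sandwich i p ts q = (\<lambda>(v, w). if v = i then
      sum_list (map (\<lambda>(c, t). if w = p @ t @ q then c else 0) ts) else 0)"

definition paths_deg :: "nat \<Rightarrow> nat \<Rightarrow> nat \<Rightarrow> nat \<Rightarrow> 'k::field kQ set" where
  "paths_deg n k i j = {pvec (i, p) | p. is_path n i p j \<and> length p = k}"

text \<open>e_i I_k e_j for the two-sided ideal I generated by the (homogeneous) relations:
  spanned by the elements p r q with p, q paths, i -p-> a, r : a -> b, b -q-> j,
  of total length k.\<close>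
definition ideal_deg :: "nat \<Rightarrow> 'k::field rel set \<Rightarrow> nat \<Rightarrow> nat \<Rightarrow> nat \<Rightarrow> 'k kQ set" where
  "ideal_deg n R k i j = {sandwich i p ts q | p q a b ts.
      (a, b, ts) \<in> R \<and> is_path n i p a \<and> is_path n b q j \<and>
      length p + length (snd (hd ts)) + length q = k}"

text \<open>(i,j) entry of H_k: dim_k e_i A_k e_j = dim e_i (kQ)_k e_j - dim e_i I_k e_j.\<close>
definition hilb_entry :: "nat \<Rightarrow> 'k::field rel set \<Rightarrow> nat \<Rightarrow> nat \<Rightarrow> nat \<Rightarrow> nat" where
  "hilb_entry n R k i j =
     dimQ (paths_deg n k i j :: 'k kQ set) - dimQ (ideal_deg n R k i j)"

definition hilb_tot :: "nat \<Rightarrow> 'k::field rel set \<Rightarrow> rat fps" where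
  "hilb_tot n R = Abs_fps (\<lambda>k. of_nat (\<Sum>i<n. \<Sum>j<n. hilb_entry n R k i j))"

definition alg_closed :: "'k::field itself \<Rightarrow> bool" where
  "alg_closed _ \<longleftrightarrow> (\<forall>p :: 'k poly. degree p > 0 \<longrightarrow> (\<exists>x. poly p x = 0))"

end

theory Submission imports Defs begin

lemma sum_fun_apply: "(sum f A) x = sum (\<lambda>i. f i x) A"
  by (induction A rule: infinite_finite_induct) auto

interpretation kq: vector_space "scaleQ :: 'k::field \<Rightarrow> 'k kQ \<Rightarrow> 'k kQ"
  by unfold_locales (auto simp: scaleQ_def fun_eq_iff algebra_simps)

lemma dimQ_kq: "dimQ = kq.dim"
  by (simp add: dimQ_def fun_eq_iff)

lemma scaleQ_apply: "scaleQ c f w = c * f w" by (simp add: scaleQ_def)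

lemma ps_lt: "n \<ge> 1 \<Longrightarrow> ps n x < n" by (simp add: ps_def)
lemma pm_lt: "n \<ge> 1 \<Longrightarrow> pm n x < n" by (simp add: pm_def)
lemma pm_eq: "x < n \<Longrightarrow> pm n x = (if x = 0 then n - 1 else x - 1)"
proof -
  assume x: "x < n"
  show ?thesis
  proof (cases "x = 0")
    case True then show ?thesis using x by (simp add: pm_def)
  next
    case False
    then have "x + n - 1 = (x - 1) + n" by simp
    then have "(x + n - 1) mod n = ((x - 1) + n) mod n" by simp
    also have "\<dots> = x - 1" using x by simp
    finally show ?thesis using False by (simp add: pm_def)
  qed
qed
lemma ps_eq: "x < n \<Longrightarrow> ps n x = (if x = n - 1 then 0 else x + 1)"
  by (simp add: ps_def)
lemma ps_pm[simp]: "x < n \<Longrightarrow> ps n (pm n x) = x"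
  by (simp add: pm_eq ps_eq, linarith)
lemma pm_ps[simp]: "x < n \<Longrightarrow> pm n (ps n x) = x"
  by (cases "x = n - 1") (auto simp: pm_eq ps_eq)


section \<open>normal words\<close>

fun nw :: "nat \<Rightarrow> nat \<Rightarrow> nat \<Rightarrow> nat \<Rightarrow> nat \<Rightarrow> arr list" where
  "nw n x (Suc a) b c = U x # nw n (ps n x) a b c"
| "nw n x 0 (Suc b) c = D (pm n x) # U (pm n x) # nw n x 0 b c"
| "nw n x 0 0 (Suc c) = D (pm n x) # nw n (pm n x) 0 0 c"
| "nw n x 0 0 0 = []"

fun nwe :: "nat \<Rightarrow> nat \<Rightarrow> nat \<Rightarrow> nat \<Rightarrow> nat \<Rightarrow> nat" where
  "nwe n x (Suc a) b c = nwe n (ps n x) a b c"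
| "nwe n x 0 (Suc b) c = nwe n x 0 b c"
| "nwe n x 0 0 (Suc c) = nwe n (pm n x) 0 0 c"
| "nwe n x 0 0 0 = x"

definition isU :: "arr \<Rightarrow> bool" where "isU a = (case a of U _ \<Rightarrow> True | D _ \<Rightarrow> False)"
definition cu :: "arr list \<Rightarrow> nat" where "cu w = length (filter isU w)"
definition cd :: "arr list \<Rightarrow> nat" where "cd w = length (filter (\<lambda>a. \<not> isU a) w)"

lemma cu_simps[simp]: "cu [] = 0" "cu (U i # w) = Suc (cu w)" "cu (D i # w) = cu w"
  by (auto simp: cu_def isU_def)
lemma cd_simps[simp]: "cd [] = 0" "cd (U i # w) = cd w" "cd (D i # w) = Suc (cd w)"
  by (auto simp: cd_def isU_def)
lemma cu_append[simp]: "cu (v @ w) = cu v + cu w" by (simp add: cu_def)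
lemma cd_append[simp]: "cd (v @ w) = cd v + cd w" by (simp add: cd_def)

lemma nw_counts: "cu (nw n x a b c) = a + b" "cd (nw n x a b c) = b + c"
    "length (nw n x a b c) = a + 2 * b + c"
  by (induction n x a b c rule: nw.induct) auto

lemma walk_U: "x < n \<Longrightarrow> walk n x (U x # w) = walk n (ps n x) w"
  by (simp add: arr_ok_def src_def tgt_def ps_def)
lemma walk_D: "n \<ge> 1 \<Longrightarrow> x < n \<Longrightarrow> walk n x (D (pm n x) # w) = walk n (pm n x) w"
  using pm_lt[of n x] ps_pm[of x n]
  by (simp add: arr_ok_def src_def tgt_def ps_def)

lemma walk_U_inv: "x < n \<Longrightarrow> walk n x (U i # w) \<noteq> None \<Longrightarrow> i = x"
  by (auto simp: arr_ok_def src_def split: if_splits)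
lemma walk_D_inv: "x < n \<Longrightarrow> walk n x (D i # w) \<noteq> None \<Longrightarrow> i = pm n x"
proof -
  assume x: "x < n" and w: "walk n x (D i # w) \<noteq> None"
  then have i: "i < n" and s: "ps n i = x"
    by (auto simp: arr_ok_def src_def ps_def split: if_splits)
  have "pm n (ps n i) = i" using i by simp
  then show ?thesis using s by simp
qed

lemma nwe_lt: "n \<ge> 1 \<Longrightarrow> x < n \<Longrightarrow> nwe n x a b c < n"
  by (induction n x a b c rule: nwe.induct) (auto simp: ps_lt pm_lt)

lemma walk_nw: "n \<ge> 1 \<Longrightarrow> x < n \<Longrightarrow> walk n x (nw n x a b c) = Some (nwe n x a b c)"
  by (induction n x a b c rule: nw.induct) (auto simp del: walk.simps(2) simp add: walk_U walk_D ps_lt pm_lt)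

lemma nwe_b: "nwe n x a b c = nwe n x a 0 c"
  by (induction n x a b c rule: nwe.induct) auto

lemma nwe_shift: "x < n \<Longrightarrow> nwe n x (Suc a) 0 (Suc c) = nwe n x a 0 c"
proof (induction a arbitrary: x)
  case 0
  then show ?case by simp
next
  case (Suc a)
  have "ps n x < n" using Suc.prems by (simp add: ps_def)
  then show ?case using Suc.IH[of "ps n x"] by simp
qed

lemma nwe_indep: "x < n \<Longrightarrow> c \<le> p \<Longrightarrow> c \<le> q \<Longrightarrow> nwe n x (p - c) c (q - c) = nwe n x p 0 q"
proof (induction c)
  case 0
  then show ?case by simp
next
  case (Suc c)
  have "nwe n x (p - Suc c) (Suc c) (q - Suc c) = nwe n x (p - Suc c) 0 (q - Suc c)"
    by (rule nwe_b)
  also have "\<dots> = nwe n x (Suc (p - Suc c)) 0 (Suc (q - Suc c))"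
    by (rule nwe_shift[symmetric]) (rule Suc.prems(1))
  also have "\<dots> = nwe n x (p - c) 0 (q - c)"
    using Suc.prems by (simp add: Suc_diff_Suc)
  also have "\<dots> = nwe n x (p - c) c (q - c)" by (rule nwe_b[symmetric])
  finally show ?case using Suc by simp
qed

section \<open>the left action of d on normal words\<close>

locale qa = fixes n :: nat and \<alpha> \<beta> :: "nat \<Rightarrow> 'k::field"
begin

function LD :: "nat \<Rightarrow> nat \<Rightarrow> nat \<Rightarrow> nat \<Rightarrow> nat \<Rightarrow> 'k" where
  "LD x p q b b' = (if p < b \<or> q < b then 0
     else if p = b then (if b = 0 then (if b' = 0 then 1 else 0)
       else \<alpha> x * (\<Sum>c<p. LD x (p-1) (q-1) (b-1) c * LD x p q c b')
          + \<beta> x * (\<Sum>c\<in>{..min (p-1) q}. LD x (p-1) (q-1) (b-1) c * LD (ps n x) (p-1) q c b'))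
     else if p = Suc b then (if b' = Suc b then 1 else 0)
     else \<alpha> (ps n x) * LD (ps n x) (p-1) q b b' + \<beta> (ps n x) * LD (ps n (ps n x)) (p-2) q b b')"
  by pat_completeness auto
termination by (relation "measure (\<lambda>(x,p,q,b,b'). p+b)") auto

declare LD.simps[simp del]

definition Ldv :: "nat \<Rightarrow> nat \<Rightarrow> nat \<Rightarrow> (nat \<Rightarrow> 'k) \<Rightarrow> nat \<Rightarrow> 'k" where
  "Ldv x p q g = (\<lambda>b'. \<Sum>c\<in>{..min p q}. g c * LD x p q c b')"

fun Nf :: "nat \<Rightarrow> arr list \<Rightarrow> nat \<Rightarrow> 'k" where
  "Nf x [] = (\<lambda>b'. if b' = 0 then 1 else 0)"
| "Nf x (U i # w) = Nf (ps n x) w"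
| "Nf x (D i # w) = Ldv (pm n x) (cu w) (cd w) (Nf (pm n x) w)"

lemma LD_supp: "min p (Suc q) < b' \<Longrightarrow> LD x p q b b' = 0"
proof (induction x p q b b' rule: LD.induct)
  case (1 x p q b b')
  show ?case
    apply (subst LD.simps)
    using 1 by (auto intro!: sum.neutral)
qed


definition dl :: "nat \<Rightarrow> nat \<Rightarrow> 'k" where "dl b = (\<lambda>c. if c = b then 1 else 0)"

lemma Ldv_supp: "min p (Suc q) < b' \<Longrightarrow> Ldv x p q g b' = 0"
  by (simp add: Ldv_def LD_supp)

lemma Nf_supp: "min (cu w) (cd w) < b' \<Longrightarrow> Nf x w b' = 0"
  by (induction x w arbitrary: b' rule: Nf.induct) (auto simp: Ldv_supp)

lemma Ldv_range:
  assumes "\<And>c. g c \<noteq> 0 \<Longrightarrow> c \<le> m" "m \<le> min p q"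
  shows "Ldv x p q g b' = (\<Sum>c\<in>{..m}. g c * LD x p q c b')"
  unfolding Ldv_def
  by (rule sum.mono_neutral_right) (use assms in auto)

lemma Ldv_dl: "b \<le> min p q \<Longrightarrow> Ldv x p q (dl b) = LD x p q b"
proof (rule ext)
  fix b' assume b: "b \<le> min p q"
  have "Ldv x p q (dl b) b' = (\<Sum>c\<in>{..min p q}. if c = b then LD x p q c b' else 0)"
    unfolding Ldv_def dl_def by (rule sum.cong) auto
  also have "\<dots> = LD x p q b b'" using b by (simp add: sum.delta)
  finally show "Ldv x p q (dl b) b' = LD x p q b b'" .
qed

lemma LD_00: "LD x 0 q 0 b' = (if b' = 0 then 1 else 0)"
  by (simp add: LD.simps[of x 0 q 0 b'])
lemma LD_a1: "b \<le> q \<Longrightarrow> LD x (Suc b) q b b' = (if b' = Suc b then 1 else 0)"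
  by (simp add: LD.simps[of x "Suc b" q b b'])
lemma LD_a2: "Suc b < p \<Longrightarrow> b \<le> q \<Longrightarrow> LD x p q b b' =
   \<alpha> (ps n x) * LD (ps n x) (p-1) q b b' + \<beta> (ps n x) * LD (ps n (ps n x)) (p-2) q b b'"
  by (simp add: LD.simps[of x p q b b'])
lemma LD_a0: "0 < b \<Longrightarrow> b \<le> q \<Longrightarrow> LD x b q b b' =
       \<alpha> x * (\<Sum>c<b. LD x (b-1) (q-1) (b-1) c * LD x b q c b')
          + \<beta> x * (\<Sum>c\<in>{..min (b-1) q}. LD x (b-1) (q-1) (b-1) c * LD (ps n x) (b-1) q c b')"
  by (simp add: LD.simps[of x b q b b'])

lemma Ldv_sum: "finite S \<Longrightarrow> Ldv x p q (\<lambda>c'. \<Sum>c\<in>S. f c * h c c') b' = (\<Sum>c\<in>S. f c * Ldv x p q (h c) b')"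
  unfolding Ldv_def by (simp add: sum_distrib_left sum_distrib_right sum.swap[of _ S] mult.assoc)

lemma Ldv_lin: "Ldv x p q (\<lambda>c. a * g c + b * h c) b' = a * Ldv x p q g b' + b * Ldv x p q h b'"
  unfolding Ldv_def by (simp add: sum_distrib_left distrib_right sum.distrib mult.assoc)

end

locale qa1 = qa n \<alpha> \<beta> for n :: nat and \<alpha> \<beta> :: "nat \<Rightarrow> 'k::field" +
  assumes n1: "n \<ge> 1"
begin

lemma RA:
  assumes g: "\<And>c. g c \<noteq> 0 \<Longrightarrow> c \<le> min p q"
  shows "Ldv x (p+2) q g b' = \<alpha> (ps n x) * Ldv (ps n x) (p+1) q g b' + \<beta> (ps n x) * Ldv (ps n (ps n x)) p q g b'"
proof -
  have "Ldv x (p+2) q g b' = (\<Sum>c\<in>{..min p q}. g c * LD x (p+2) q c b')"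
    by (rule Ldv_range) (use g in auto)
  also have "\<dots> = (\<Sum>c\<in>{..min p q}. g c * (\<alpha> (ps n x) * LD (ps n x) (p+1) q c b' + \<beta> (ps n x) * LD (ps n (ps n x)) p q c b'))"
    by (rule sum.cong) (auto simp: LD_a2)
  also have "\<dots> = \<alpha> (ps n x) * (\<Sum>c\<in>{..min p q}. g c * LD (ps n x) (p+1) q c b') + \<beta> (ps n x) * (\<Sum>c\<in>{..min p q}. g c * LD (ps n (ps n x)) p q c b')"
    by (simp add: sum_distrib_left sum.distrib algebra_simps)
  also have "\<dots> = \<alpha> (ps n x) * Ldv (ps n x) (p+1) q g b' + \<beta> (ps n x) * Ldv (ps n (ps n x)) p q g b'"
  proof -
    have "Ldv (ps n x) (p+1) q g b' = (\<Sum>c\<in>{..min p q}. g c * LD (ps n x) (p+1) q c b')"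
      by (rule Ldv_range) (use g in auto)
    moreover have "Ldv (ps n (ps n x)) p q g b' = (\<Sum>c\<in>{..min p q}. g c * LD (ps n (ps n x)) p q c b')"
      by (rule Ldv_range) (use g in auto)
    ultimately show ?thesis by simp
  qed
  finally show ?thesis .
qed

lemma LD_supp': "\<And>c. LD x p q b c \<noteq> 0 \<Longrightarrow> c \<le> min p (Suc q)"
  using LD_supp by (meson not_le)

lemma RB_top:
  assumes "x < n" "p \<le> q"
  shows "Ldv x (p+1) (q+1) (Ldv (pm n x) (p+1) q (dl p)) b' =
     \<alpha> x * Ldv x (p+1) (q+1) (Ldv x p q (dl p)) b' + \<beta> x * Ldv (ps n x) p (q+1) (Ldv x p q (dl p)) b'"
proof -
  have i1: "Ldv (pm n x) (p+1) q (dl p) = dl (p+1)"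
  proof -
    have "Ldv (pm n x) (p+1) q (dl p) = LD (pm n x) (p+1) q p" by (rule Ldv_dl) (use assms in simp)
    then show ?thesis using assms by (simp add: LD_a1 dl_def fun_eq_iff)
  qed
  have "Ldv x (p+1) (q+1) (dl (p+1)) b' = LD x (p+1) (q+1) (p+1) b'"
    using assms by (simp add: Ldv_dl)
  also have "\<dots> = \<alpha> x * (\<Sum>c<p+1. LD x p q p c * LD x (p+1) (q+1) c b')
          + \<beta> x * (\<Sum>c\<in>{..min p (q+1)}. LD x p q p c * LD (ps n x) p (q+1) c b')"
    using assms LD_a0[of "p+1" "q+1" x b'] by simp
  also have "(\<Sum>c<p+1. LD x p q p c * LD x (p+1) (q+1) c b') = Ldv x (p+1) (q+1) (Ldv x p q (dl p)) b'"
  proof -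
    have "Ldv x (p+1) (q+1) (LD x p q p) b' = (\<Sum>c\<in>{..min p (q+1)}. LD x p q p c * LD x (p+1) (q+1) c b')"
      by (rule Ldv_range) (auto dest: LD_supp')
    moreover have "{..<p+1} = {..min p (q+1)}" using assms by auto
    ultimately show ?thesis using assms by (simp add: Ldv_dl)
  qed
  also have "(\<Sum>c\<in>{..min p (q+1)}. LD x p q p c * LD (ps n x) p (q+1) c b') = Ldv (ps n x) p (q+1) (Ldv x p q (dl p)) b'"
    using assms by (simp add: Ldv_dl, simp add: Ldv_def)
  finally show ?thesis using i1 by simp
qed

lemma RB_dl:
  assumes "x < n" "b \<le> min p q"
  shows "Ldv x (p+1) (q+1) (Ldv (pm n x) (p+1) q (dl b)) b' =
     \<alpha> x * Ldv x (p+1) (q+1) (Ldv x p q (dl b)) b' + \<beta> x * Ldv (ps n x) p (q+1) (Ldv x p q (dl b)) b'"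
  using assms
proof (induction p arbitrary: x q b b')
  case 0
  then show ?case using RB_top[of x 0 q b'] by simp
next
  case (Suc p)
  show ?case
  proof (cases "b = Suc p")
    case True
    then show ?thesis using RB_top[of x "Suc p" q b'] Suc.prems by simp
  next
    case False
    then have b: "b \<le> min p q" using Suc.prems by auto
    have x: "x < n" "ps n x < n" using Suc.prems ps_lt n1 by auto
    have dlsupp: "\<And>c. dl b c \<noteq> 0 \<Longrightarrow> c \<le> min p q" using b by (simp add: dl_def split: if_splits)
    have inner: "Ldv (pm n x) (Suc p + 1) q (dl b) = (\<lambda>c. \<alpha> x * LD x (Suc p) q b c + \<beta> x * LD (ps n x) p q b c)"
    proof
      fix c
      have "Ldv (pm n x) (p + 2) q (dl b) c = \<alpha> (ps n (pm n x)) * Ldv (ps n (pm n x)) (p+1) q (dl b) c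
          + \<beta> (ps n (pm n x)) * Ldv (ps n (ps n (pm n x))) p q (dl b) c"
        by (rule RA) (rule dlsupp)
      then show "Ldv (pm n x) (Suc p + 1) q (dl b) c = \<alpha> x * LD x (Suc p) q b c + \<beta> x * LD (ps n x) p q b c"
        using x b by (simp add: Ldv_dl)
    qed
    have key: "Ldv x (p+2) (q+1) (LD (ps n x) p q b) b' = Ldv (ps n x) (Suc p) (q+1) (LD x (Suc p) q b) b'"
    proof -
      have "Ldv x (p+2) (q+1) (LD (ps n x) p q b) b' = \<alpha> (ps n x) * Ldv (ps n x) (p+1) (q+1) (LD (ps n x) p q b) b'
          + \<beta> (ps n x) * Ldv (ps n (ps n x)) p (q+1) (LD (ps n x) p q b) b'"
        by (rule RA) (auto dest: LD_supp')
      moreover have "Ldv (ps n x) (p+1) (q+1) (Ldv (pm n (ps n x)) (p+1) q (dl b)) b' =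
          \<alpha> (ps n x) * Ldv (ps n x) (p+1) (q+1) (Ldv (ps n x) p q (dl b)) b' + \<beta> (ps n x) * Ldv (ps n (ps n x)) p (q+1) (Ldv (ps n x) p q (dl b)) b'"
        using Suc.IH[of "ps n x" b q b'] x b by simp
      ultimately show ?thesis using x b by (simp add: Ldv_dl)
    qed
    have "Ldv x (Suc p + 1) (q + 1) (Ldv (pm n x) (Suc p + 1) q (dl b)) b'
        = \<alpha> x * Ldv x (Suc p + 1) (q + 1) (LD x (Suc p) q b) b' + \<beta> x * Ldv x (p+2) (q + 1) (LD (ps n x) p q b) b'"
      unfolding inner by (simp add: Ldv_lin)
    then show ?thesis using key x b by (simp add: Ldv_dl)
  qed
qed


lemma Ldv_expand:
  assumes "\<And>c. g c \<noteq> 0 \<Longrightarrow> c \<le> m" "m \<le> min p q"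
  shows "Ldv x p q g = (\<lambda>c'. \<Sum>c\<in>{..m}. g c * LD x p q c c')"
  using Ldv_range[OF assms] by auto

lemma RB:
  assumes x: "x < n" and g: "\<And>c. g c \<noteq> 0 \<Longrightarrow> c \<le> min p q"
  shows "Ldv x (p+1) (q+1) (Ldv (pm n x) (p+1) q g) b' =
     \<alpha> x * Ldv x (p+1) (q+1) (Ldv x p q g) b' + \<beta> x * Ldv (ps n x) p (q+1) (Ldv x p q g) b'"
proof -
  let ?m = "min p q"
  have e1: "Ldv (pm n x) (p+1) q g = (\<lambda>c'. \<Sum>c\<in>{..?m}. g c * LD (pm n x) (p+1) q c c')"
    by (rule Ldv_expand) (use g in auto)
  have e2: "Ldv x p q g = (\<lambda>c'. \<Sum>c\<in>{..?m}. g c * LD x p q c c')"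
    by (rule Ldv_expand) (use g in auto)
  have "Ldv x (p+1) (q+1) (Ldv (pm n x) (p+1) q g) b' = (\<Sum>c\<in>{..?m}. g c * Ldv x (p+1) (q+1) (Ldv (pm n x) (p+1) q (dl c)) b')"
    unfolding e1 by (simp add: Ldv_sum Ldv_dl)
  also have "\<dots> = (\<Sum>c\<in>{..?m}. g c * (\<alpha> x * Ldv x (p+1) (q+1) (Ldv x p q (dl c)) b' + \<beta> x * Ldv (ps n x) p (q+1) (Ldv x p q (dl c)) b'))"
    by (rule sum.cong) (use x RB_dl in auto)
  also have "\<dots> = \<alpha> x * (\<Sum>c\<in>{..?m}. g c * Ldv x (p+1) (q+1) (LD x p q c) b') + \<beta> x * (\<Sum>c\<in>{..?m}. g c * Ldv (ps n x) p (q+1) (LD x p q c) b')"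
    by (simp add: Ldv_dl sum_distrib_left sum.distrib algebra_simps)
  also have "\<dots> = \<alpha> x * Ldv x (p+1) (q+1) (Ldv x p q g) b' + \<beta> x * Ldv (ps n x) p (q+1) (Ldv x p q g) b'"
    unfolding e2 by (simp add: Ldv_sum)
  finally show ?thesis .
qed

lemma Ldv_lin3: "Ldv x p q (\<lambda>c. a1 * g1 c + a2 * g2 c + a3 * g3 c) b' =
   a1 * Ldv x p q g1 b' + a2 * Ldv x p q g2 b' + a3 * Ldv x p q g3 b'"
  unfolding Ldv_def by (simp add: sum_distrib_left distrib_right sum.distrib mult.assoc)

lemma Ldv_zero: "(\<And>c. g c = 0) \<Longrightarrow> Ldv x p q g b' = 0"
  unfolding Ldv_def by simp

fun pend :: "nat \<Rightarrow> arr list \<Rightarrow> nat" where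
  "pend x [] = x"
| "pend x (U i # w) = pend (ps n x) w"
| "pend x (D i # w) = pend (pm n x) w"

lemma Nf_kill_ext:
  assumes "cu t1 = cu t2" "cu t1 = cu t3" "cd t1 = cd t2" "cd t1 = cd t3"
    and base: "\<And>b'. a1 * Nf (pend i pp) (t1 @ qq) b' + a2 * Nf (pend i pp) (t2 @ qq) b' + a3 * Nf (pend i pp) (t3 @ qq) b' = 0"
  shows "a1 * Nf i (pp @ t1 @ qq) b' + a2 * Nf i (pp @ t2 @ qq) b' + a3 * Nf i (pp @ t3 @ qq) b' = 0"
  using base
proof (induction i pp arbitrary: b' rule: pend.induct)
  case (1 x)
  then show ?case by simp
next
  case (2 x j w)
  then show ?case by simp
next
  case (3 x j w)
  have "a1 * Nf x ((D j # w) @ t1 @ qq) b' + a2 * Nf x ((D j # w) @ t2 @ qq) b' + a3 * Nf x ((D j # w) @ t3 @ qq) b'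
     = Ldv (pm n x) (cu (w @ t1 @ qq)) (cd (w @ t1 @ qq))
        (\<lambda>c. a1 * Nf (pm n x) (w @ t1 @ qq) c + a2 * Nf (pm n x) (w @ t2 @ qq) c + a3 * Nf (pm n x) (w @ t3 @ qq) c) b'"
    using assms(1-4) by (simp add: Ldv_lin3)
  also have "\<dots> = 0" by (rule Ldv_zero) (use 3 in simp)
  finally show ?case .
qed

lemma kill_A:
  assumes i: "i < n"
  shows "1 * Nf i ([D (pm n i), U (pm n i), U i] @ qq) b' + (- \<alpha> i) * Nf i ([U i, D i, U i] @ qq) b'
     + (- \<beta> i) * Nf i ([U i, U (ps n i), D (ps n i)] @ qq) b' = 0"
proof -
  have g: "\<And>c. Nf (ps n i) qq c \<noteq> 0 \<Longrightarrow> c \<le> min (cu qq) (cd qq)"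
    using Nf_supp by (meson not_le)
  have "Ldv (pm n i) (cu qq + 2) (cd qq) (Nf (ps n i) qq) b' = \<alpha> (ps n (pm n i)) * Ldv (ps n (pm n i)) (cu qq + 1) (cd qq) (Nf (ps n i) qq) b'
     + \<beta> (ps n (pm n i)) * Ldv (ps n (ps n (pm n i))) (cu qq) (cd qq) (Nf (ps n i) qq) b'"
    by (rule RA) (rule g)
  moreover have "ps n i < n" using ps_lt n1 by auto
  ultimately show ?thesis using i by simp
qed

lemma kill_B:
  assumes i: "i < n"
  shows "1 * Nf (ps n i) ([D i, D (pm n i), U (pm n i)] @ qq) b' + (- \<alpha> i) * Nf (ps n i) ([D i, U i, D i] @ qq) b'
     + (- \<beta> i) * Nf (ps n i) ([U (ps n i), D (ps n i), D i] @ qq) b' = 0"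
proof -
  have g: "\<And>c. Nf i qq c \<noteq> 0 \<Longrightarrow> c \<le> min (cu qq) (cd qq)"
    using Nf_supp by (meson not_le)
  have ps: "ps n i < n" using ps_lt n1 by auto
  have "Ldv i (cu qq + 1) (cd qq + 1) (Ldv (pm n i) (cu qq + 1) (cd qq) (Nf i qq)) b' =
     \<alpha> i * Ldv i (cu qq + 1) (cd qq + 1) (Ldv i (cu qq) (cd qq) (Nf i qq)) b' + \<beta> i * Ldv (ps n i) (cu qq) (cd qq + 1) (Ldv i (cu qq) (cd qq) (Nf i qq)) b'"
    by (rule RB) (use i g in auto)
  then show ?thesis using i ps by simp
qed

end


context qa
begin

definition pv :: "nat \<Rightarrow> arr list \<Rightarrow> 'k kQ" where "pv x w = pvec (x, w)"
definition emb :: "nat \<Rightarrow> nat \<Rightarrow> nat \<Rightarrow> (nat \<Rightarrow> 'k) \<Rightarrow> 'k kQ" where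
  "emb x p q g = (\<Sum>c\<in>{..min p q}. scaleQ (g c) (pv x (nw n x (p-c) c (q-c))))"
definition prep :: "nat \<Rightarrow> arr \<Rightarrow> nat \<Rightarrow> 'k kQ \<Rightarrow> 'k kQ" where
  "prep x a y f = (\<lambda>(v,w). if v = x \<and> w \<noteq> [] \<and> hd w = a then f (y, tl w) else 0)"

abbreviation IS :: "nat \<Rightarrow> nat \<Rightarrow> nat \<Rightarrow> 'k kQ set" where
  "IS k i j \<equiv> kq.span (ideal_deg n (rels n \<alpha> \<beta>) k i j)"

lemma prep_add: "prep x a y (f + g) = prep x a y f + prep x a y g"
  by (auto simp: prep_def fun_eq_iff)
lemma prep_diff: "prep x a y (f - g) = prep x a y f - prep x a y g"
  by (auto simp: prep_def fun_eq_iff)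
lemma prep_scale: "prep x a y (scaleQ c f) = scaleQ c (prep x a y f)"
  by (auto simp: prep_def fun_eq_iff scaleQ_apply)
lemma prep_zero: "prep x a y 0 = 0"
  by (auto simp: prep_def fun_eq_iff)
lemma prep_sum: "prep x a y (sum f S) = (\<Sum>i\<in>S. prep x a y (f i))"
proof (induction S rule: infinite_finite_induct)
  case (infinite A)
  then show ?case by (metis sum.infinite prep_zero)
next
  case empty
  then show ?case by (simp only: sum.empty prep_zero)
next
  case (insert z F)
  have "prep x a y (sum f (insert z F)) = prep x a y (f z + sum f F)"
    using insert(1,2) by (subst sum.insert) auto
  also have "\<dots> = prep x a y (f z) + (\<Sum>i\<in>F. prep x a y (f i))"
    unfolding prep_add insert(3) ..
  also have "\<dots> = (\<Sum>i\<in>insert z F. prep x a y (f i))"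
    using insert(1,2) by (subst sum.insert) auto
  finally show ?case .
qed
lemma prep_pv: "prep x a y (pv y w) = pv x (a # w)"
  by (auto simp: prep_def pv_def pvec_def fun_eq_iff neq_Nil_conv)

lemma sandwich_prep: "prep x a y (sandwich y p ts q) = sandwich x (a # p) ts q"
proof -
  have z: "sum_list (map (\<lambda>(c, t). if w = a # p @ t @ q then c else 0) ts) = 0"
    if "\<not> (w \<noteq> [] \<and> hd w = a)" for w :: "arr list"
    using that by (induction ts) auto
  show ?thesis
    unfolding prep_def sandwich_def
    by (auto simp: fun_eq_iff z neq_Nil_conv)
qed

lemma prep_span:
  assumes x: "x < n" and a: "arr_ok n a" "src n a = x" "tgt n a = y"
    and f: "f \<in> IS k y j"
  shows "prep x a y f \<in> IS (Suc k) x j"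
  using f
proof (induction rule: kq.span_induct_alt)
  case base
  then show ?case unfolding prep_zero by (rule kq.span_zero)
next
  case (step c g h)
  have "prep x a y g \<in> ideal_deg n (rels n \<alpha> \<beta>) (Suc k) x j"
  proof -
    from step(1) obtain p qq aa bb ts where g: "g = sandwich y p ts qq" and
      r: "(aa, bb, ts) \<in> rels n \<alpha> \<beta>" "is_path n y p aa" "is_path n bb qq j"
      "length p + length (snd (hd ts)) + length qq = k"
      unfolding ideal_deg_def by blast
    have "is_path n x (a # p) aa" using r(2) x a by (auto simp: is_path_def)
    then show ?thesis unfolding ideal_deg_def g sandwich_prep using r by fastforce
  qed
  then show ?case
    unfolding prep_add prep_scale using step(2) kq.span_base by (metis kq.span_add kq.span_scale)
qed

lemma prep_U_span: "x < n \<Longrightarrow> f \<in> IS k (ps n x) j \<Longrightarrow> prep x (U x) (ps n x) f \<in> IS (Suc k) x j"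
  by (rule prep_span) (auto simp: arr_ok_def src_def tgt_def ps_def)

end

context qa1
begin

lemma prep_D_span: "y < n \<Longrightarrow> f \<in> IS k y j \<Longrightarrow> prep (ps n y) (D y) y f \<in> IS (Suc k) (ps n y) j"
  by (rule prep_span) (auto simp: arr_ok_def src_def tgt_def ps_def n1)

end


context qa
begin

lemma emb_range:
  assumes "\<And>c. g c \<noteq> 0 \<Longrightarrow> c \<le> m" "m \<le> min p q"
  shows "emb x p q g = (\<Sum>c\<in>{..m}. scaleQ (g c) (pv x (nw n x (p-c) c (q-c))))"
  unfolding emb_def
  by (rule sum.mono_neutral_right) (use assms in auto)

lemma emb_dl: "b \<le> min p q \<Longrightarrow> emb x p q (dl b) = pv x (nw n x (p-b) b (q-b))"
proof -
  assume b: "b \<le> min p q"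
  have "emb x p q (dl b) = (\<Sum>c\<in>{..min p q}. if c = b then pv x (nw n x (p-c) c (q-c)) else 0)"
    unfolding emb_def dl_def by (rule sum.cong) auto
  also have "\<dots> = pv x (nw n x (p-b) b (q-b))" using b by (simp add: sum.delta)
  finally show ?thesis .
qed

lemma emb_lin: "emb x p q (\<lambda>c. a * g c + b * h c) = scaleQ a (emb x p q g) + scaleQ b (emb x p q h)"
  unfolding emb_def by (simp add: kq.scale_left_distrib sum.distrib kq.scale_sum_right)

lemma emb_sum: "finite S \<Longrightarrow> emb x p q (\<lambda>c'. \<Sum>c\<in>S. f c * h c c') = (\<Sum>c\<in>S. scaleQ (f c) (emb x p q (h c)))"
  unfolding emb_def by (simp add: kq.scale_sum_left kq.scale_sum_right sum.swap[of _ S])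

lemma emb_prepU:
  assumes x: "x < n" and g: "\<And>c. g c \<noteq> 0 \<Longrightarrow> c \<le> min p q"
  shows "prep x (U x) (ps n x) (emb (ps n x) p q g) = emb x (Suc p) q g"
proof -
  have "prep x (U x) (ps n x) (emb (ps n x) p q g) =
      (\<Sum>c\<in>{..min p q}. scaleQ (g c) (pv x (U x # nw n (ps n x) (p-c) c (q-c))))"
    unfolding emb_def prep_sum prep_scale prep_pv ..
  also have "\<dots> = (\<Sum>c\<in>{..min p q}. scaleQ (g c) (pv x (nw n x (Suc p - c) c (q-c))))"
    by (rule sum.cong) (auto simp: Suc_diff_le)
  also have "\<dots> = emb x (Suc p) q g"
    by (rule emb_range[symmetric]) (use g in auto)
  finally show ?thesis .
qed

lemma sandwich3: "sandwich i [] [(c1,t1),(c2,t2),(c3,t3)] qq =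
   scaleQ c1 (pv i (t1 @ qq)) + scaleQ c2 (pv i (t2 @ qq)) + scaleQ c3 (pv i (t3 @ qq))"
  by (auto simp: fun_eq_iff sandwich_def pv_def pvec_def scaleQ_apply)

lemma LDV_KEY:
  assumes H: "\<And>c. c \<le> min p q \<Longrightarrow> g c \<noteq> 0 \<Longrightarrow>
     prep (ps n y) (D y) y (pv y (nw n y (p-c) c (q-c))) - emb (ps n y) p (Suc q) (LD y p q c) \<in> IS k (ps n y) E"
  shows "prep (ps n y) (D y) y (emb y p q g) - emb (ps n y) p (Suc q) (Ldv y p q g) \<in> IS k (ps n y) E"
proof -
  have "emb (ps n y) p (Suc q) (Ldv y p q g) = (\<Sum>c\<in>{..min p q}. scaleQ (g c) (emb (ps n y) p (Suc q) (LD y p q c)))"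
    unfolding Ldv_def by (rule emb_sum) simp
  moreover have "prep (ps n y) (D y) y (emb y p q g) = (\<Sum>c\<in>{..min p q}. scaleQ (g c) (prep (ps n y) (D y) y (pv y (nw n y (p-c) c (q-c)))))"
    unfolding emb_def prep_sum prep_scale ..
  ultimately have "prep (ps n y) (D y) y (emb y p q g) - emb (ps n y) p (Suc q) (Ldv y p q g) =
     (\<Sum>c\<in>{..min p q}. scaleQ (g c) (prep (ps n y) (D y) y (pv y (nw n y (p-c) c (q-c))) - emb (ps n y) p (Suc q) (LD y p q c)))"
    by (simp add: sum_subtractf kq.scale_right_diff_distrib)
  also have "\<dots> \<in> IS k (ps n y) E"
  proof (rule kq.span_sum)
    fix c assume c: "c \<in> {..min p q}"
    show "scaleQ (g c) (prep (ps n y) (D y) y (pv y (nw n y (p-c) c (q-c))) - emb (ps n y) p (Suc q) (LD y p q c)) \<in> IS k (ps n y) E"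
    proof (cases "g c = 0")
      case True
      then show ?thesis by (simp add: kq.span_zero)
    next
      case False
      then show ?thesis using H c by (intro kq.span_scale) auto
    qed
  qed
  finally show ?thesis .
qed

end


context qa1
begin

lemma gen_A:
  assumes i: "i < n" and Y: "walk n (ps n i) Y = Some j"
  shows "pv i ([D (pm n i), U (pm n i), U i] @ Y) + scaleQ (- \<alpha> i) (pv i ([U i, D i, U i] @ Y))
     + scaleQ (- \<beta> i) (pv i ([U i, U (ps n i), D (ps n i)] @ Y)) \<in> IS (length Y + 3) i j"
proof -
  have "relA n \<alpha> \<beta> i \<in> rels n \<alpha> \<beta>" using i by (auto simp: rels_def)
  moreover have "is_path n i [] i" using i by (simp add: is_path_def)
  moreover have "is_path n (ps n i) Y j" using Y ps_lt n1 by (simp add: is_path_def)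
  ultimately have "sandwich i [] (snd (snd (relA n \<alpha> \<beta> i))) Y \<in> ideal_deg n (rels n \<alpha> \<beta>) (length Y + 3) i j"
    unfolding ideal_deg_def relA_def by fastforce
  then show ?thesis
    unfolding relA_def by (simp add: sandwich3 kq.span_base)
qed

lemma gen_B:
  assumes i: "i < n" and Y: "walk n i Y = Some j"
  shows "pv (ps n i) ([D i, D (pm n i), U (pm n i)] @ Y) + scaleQ (- \<alpha> i) (pv (ps n i) ([D i, U i, D i] @ Y))
     + scaleQ (- \<beta> i) (pv (ps n i) ([U (ps n i), D (ps n i), D i] @ Y)) \<in> IS (length Y + 3) (ps n i) j"
proof -
  have "relB n \<alpha> \<beta> i \<in> rels n \<alpha> \<beta>" using i by (auto simp: rels_def)
  moreover have "is_path n (ps n i) [] (ps n i)" using ps_lt n1 by (simp add: is_path_def)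
  moreover have "is_path n i Y j" using Y i by (simp add: is_path_def)
  ultimately have "sandwich (ps n i) [] (snd (snd (relB n \<alpha> \<beta> i))) Y \<in> ideal_deg n (rels n \<alpha> \<beta>) (length Y + 3) (ps n i) j"
    unfolding ideal_deg_def relB_def by fastforce
  then show ?thesis
    unfolding relB_def by (simp add: sandwich3 kq.span_base)
qed

end


context qa1
begin

lemma KEY:
  assumes "y < n" "b \<le> min p q"
  shows "prep (ps n y) (D y) y (pv y (nw n y (p-b) b (q-b))) - emb (ps n y) p (Suc q) (LD y p q b)
     \<in> IS (p+q+1) (ps n y) (nwe n y p 0 q)"
  using assms
proof (induction "p+b" arbitrary: y p q b rule: less_induct)
  case less
  note IH = less.hyps
  have y: "y < n" and b: "b \<le> p" "b \<le> q" using less.prems by auto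
  have psy: "ps n y < n" "ps n (ps n y) < n" "ps n (ps n (ps n y)) < n" using ps_lt n1 by auto
  consider (z) "p = 0" | (one) "p = Suc b" | (two) "Suc b < p" | (top) "p = b" "0 < b" using b by linarith
  then show ?case
  proof cases
    case z
    then have b0: "b = 0" using b by simp
    have "LD y 0 q 0 = dl 0" by (simp add: fun_eq_iff LD_00 dl_def)
    then have "emb (ps n y) p (Suc q) (LD y p q b) = pv (ps n y) (nw n (ps n y) 0 0 (Suc q))"
      using z b0 by (simp add: emb_dl)
    moreover have "prep (ps n y) (D y) y (pv y (nw n y (p-b) b (q-b))) = pv (ps n y) (nw n (ps n y) 0 0 (Suc q))"
      using z b0 y by (simp add: prep_pv)
    ultimately show ?thesis by (simp add: kq.span_zero)
  next
    case one
    have "LD y p q b = dl (Suc b)" using one b by (simp add: fun_eq_iff LD_a1 dl_def)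
    then have "emb (ps n y) p (Suc q) (LD y p q b) = pv (ps n y) (nw n (ps n y) 0 (Suc b) (q - b))"
      using one b by (simp add: emb_dl)
    moreover have "prep (ps n y) (D y) y (pv y (nw n y (p-b) b (q-b))) = pv (ps n y) (nw n (ps n y) 0 (Suc b) (q - b))"
      using one y by (simp add: prep_pv)
    ultimately show ?thesis by (simp add: kq.span_zero)
  next
    case two
    define i where "i = ps n y"
    define a' where "a' = p - b - 2"
    define Y' where "Y' = nw n (ps n i) a' b (q - b)"
    have i: "i < n" "ps n i < n" "pm n i = y" using psy y by (auto simp: i_def)
    have pa: "p - b = Suc (Suc a')" using two by (simp add: a'_def)
    have W0: "nw n y (p-b) b (q-b) = U y # U i # Y'" unfolding pa by (simp add: Y'_def i_def)
    have E: "nwe n (ps n i) a' b (q-b) = nwe n y p 0 q"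
    proof -
      have "nwe n y p 0 q = nwe n y (p-b) b (q-b)" using nwe_indep[of y n b p q] y b by simp
      then show ?thesis unfolding pa by (simp add: i_def)
    qed
    have E1: "nwe n i (p-1) 0 q = nwe n y p 0 q"
      using two by (cases p) (auto simp: i_def)
    have E2: "nwe n (ps n i) (p-2) 0 q = nwe n y p 0 q"
    proof -
      have "p = Suc (Suc (p - 2))" using two by arith
      then show ?thesis by (metis nwe.simps(1) i_def)
    qed
    have lenY: "length Y' + 3 = p + q + 1" using two b by (simp add: Y'_def nw_counts a'_def)
    have G: "pv i ([D y, U y, U i] @ Y') + scaleQ (- \<alpha> i) (pv i ([U i, D i, U i] @ Y'))
     + scaleQ (- \<beta> i) (pv i ([U i, U (ps n i), D (ps n i)] @ Y')) \<in> IS (p+q+1) i (nwe n y p 0 q)"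
    proof -
      have "walk n (ps n i) Y' = Some (nwe n (ps n i) a' b (q-b))" unfolding Y'_def by (rule walk_nw[OF n1 i(2)])
      from gen_A[OF i(1) this] show ?thesis unfolding lenY E i(3) .
    qed
    have LDe: "LD y p q b = (\<lambda>c. \<alpha> i * LD i (p-1) q b c + \<beta> i * LD (ps n i) (p-2) q b c)"
      using two b by (simp add: fun_eq_iff LD_a2 i_def)
    have IH1: "prep (ps n i) (D i) i (pv i (nw n i (p-1-b) b (q-b))) - emb (ps n i) (p-1) (Suc q) (LD i (p-1) q b)
        \<in> IS (p-1+q+1) (ps n i) (nwe n i (p-1) 0 q)"
      by (rule IH) (use two b i in auto)
    have X1: "pv i (U i # D i # U i # Y') - emb i p (Suc q) (LD i (p-1) q b) \<in> IS (p+q+1) i (nwe n y p 0 q)"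
    proof -
      have w: "nw n i (p-1-b) b (q-b) = U i # Y'"
      proof -
        have "p - 1 - b = Suc a'" using two by (simp add: a'_def)
        then show ?thesis by (simp add: Y'_def)
      qed
      have s1: "Suc (p-1) = p" using two by simp
      have emb_eq: "prep i (U i) (ps n i) (emb (ps n i) (p-1) (Suc q) (LD i (p-1) q b)) = emb i p (Suc q) (LD i (p-1) q b)"
        using emb_prepU[OF i(1), of "LD i (p-1) q b" "p-1" "Suc q"] LD_supp' unfolding s1 by blast
      have eqs: "Suc (p-1+q+1) = p+q+1" using two by simp
      from prep_U_span[OF i(1) IH1] show ?thesis unfolding prep_diff prep_pv w emb_eq E1 eqs .
    qed
    have IH2: "prep (ps n (ps n i)) (D (ps n i)) (ps n i) (pv (ps n i) (nw n (ps n i) (p-2-b) b (q-b))) - emb (ps n (ps n i)) (p-2) (Suc q) (LD (ps n i) (p-2) q b)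
        \<in> IS (p-2+q+1) (ps n (ps n i)) (nwe n (ps n i) (p-2) 0 q)"
      by (rule IH) (use two b i in auto)
    have X2: "pv i (U i # U (ps n i) # D (ps n i) # Y') - emb i p (Suc q) (LD (ps n i) (p-2) q b) \<in> IS (p+q+1) i (nwe n y p 0 q)"
    proof -
      have w: "nw n (ps n i) (p-2-b) b (q-b) = Y'"
        by (simp add: Y'_def a'_def)
      have s1: "Suc (Suc (p-2)) = p" using two by simp
      have e1: "prep (ps n i) (U (ps n i)) (ps n (ps n i)) (emb (ps n (ps n i)) (p-2) (Suc q) (LD (ps n i) (p-2) q b)) = emb (ps n i) (Suc (p-2)) (Suc q) (LD (ps n i) (p-2) q b)"
        by (rule emb_prepU[OF i(2)]) (rule LD_supp')
      have e2: "prep i (U i) (ps n i) (emb (ps n i) (Suc (p-2)) (Suc q) (LD (ps n i) (p-2) q b)) = emb i p (Suc q) (LD (ps n i) (p-2) q b)"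
        using emb_prepU[OF i(1), of "LD (ps n i) (p-2) q b" "Suc (p-2)" "Suc q"] LD_supp'[of "ps n i" "p-2" q b] unfolding s1 by fastforce
      have eqs: "Suc (Suc (p-2+q+1)) = p+q+1" using two by simp
      from prep_U_span[OF i(1) prep_U_span[OF i(2) IH2]] show ?thesis
        unfolding prep_diff prep_pv w e1 e2 E2 eqs .
    qed
    have tg: "prep i (D y) y (pv y (nw n y (p-b) b (q-b))) - emb i p (Suc q) (LD y p q b) =
        (pv i ([D y, U y, U i] @ Y') + scaleQ (- \<alpha> i) (pv i ([U i, D i, U i] @ Y'))
           + scaleQ (- \<beta> i) (pv i ([U i, U (ps n i), D (ps n i)] @ Y')))
        + scaleQ (\<alpha> i) (pv i (U i # D i # U i # Y') - emb i p (Suc q) (LD i (p-1) q b))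
        + scaleQ (\<beta> i) (pv i (U i # U (ps n i) # D (ps n i) # Y') - emb i p (Suc q) (LD (ps n i) (p-2) q b))"
      unfolding W0 LDe emb_lin prep_pv by (simp add: kq.scale_right_diff_distrib algebra_simps)
    have "prep i (D y) y (pv y (nw n y (p-b) b (q-b))) - emb i p (Suc q) (LD y p q b) \<in> IS (p+q+1) i (nwe n y p 0 q)"
      unfolding tg by (rule kq.span_add[OF kq.span_add[OF G kq.span_scale[OF X1]] kq.span_scale[OF X2]])
    then show ?thesis by (simp add: i_def)
  next
    case top
    define Y where "Y = nw n y 0 (b - 1) (q - b)"
    define L1 where "L1 = LD y (p-1) (q-1) (p-1)"
    define E where "E = nwe n y p 0 q"
    have pb: "p = Suc (p - 1)" "b = p" using top by auto
    have qp: "p \<le> q" using b top by simp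
    have W0: "nw n y (p-b) b (q-b) = D (pm n y) # U (pm n y) # Y"
      using top by (cases b) (auto simp: Y_def)
    have L1supp: "\<And>c. L1 c \<noteq> 0 \<Longrightarrow> c \<le> min (p-1) q"
    proof -
      fix c assume "L1 c \<noteq> 0"
      then have "c \<le> min (p-1) (Suc (q-1))" unfolding L1_def by (rule LD_supp')
      then show "c \<le> min (p-1) q" using qp top by simp
    qed
    have LDe: "LD y p q b = (\<lambda>c. \<alpha> y * Ldv y p q L1 c + \<beta> y * Ldv (ps n y) (p-1) q L1 c)"
    proof
      fix c
      have "LD y p q p c = \<alpha> y * (\<Sum>c'<p. L1 c' * LD y p q c' c)
          + \<beta> y * (\<Sum>c'\<in>{..min (p-1) q}. L1 c' * LD (ps n y) (p-1) q c' c)"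
        unfolding L1_def using LD_a0[of p q y c] top qp by simp
      moreover have "Ldv y p q L1 c = (\<Sum>c'<p. L1 c' * LD y p q c' c)"
      proof -
        have "Ldv y p q L1 c = (\<Sum>c'\<in>{..min (p-1) q}. L1 c' * LD y p q c' c)"
          by (rule Ldv_range) (use L1supp in auto)
        moreover have "{..min (p-1) q} = {..<p}" using qp top by auto
        ultimately show ?thesis by simp
      qed
      moreover have "Ldv (ps n y) (p-1) q L1 c = (\<Sum>c'\<in>{..min (p-1) q}. L1 c' * LD (ps n y) (p-1) q c' c)"
        by (simp add: Ldv_def)
      ultimately show "LD y p q b c = \<alpha> y * Ldv y p q L1 c + \<beta> y * Ldv (ps n y) (p-1) q L1 c"
        using top by simp
    qed
    have E0: "nwe n y (p-1) 0 (q-1) = E"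
    proof -
      have "nwe n y (Suc (p-1)) 0 (Suc (q-1)) = nwe n y (p-1) 0 (q-1)" by (rule nwe_shift[OF y])
      then show ?thesis unfolding E_def using qp top by simp
    qed
    have EY: "nwe n y 0 (b-1) (q-b) = E"
    proof -
      have "nwe n y p 0 q = nwe n y (p-b) b (q-b)" using nwe_indep[of y n b p q] y b by simp
      then show ?thesis unfolding E_def using top nwe_b[of n y 0 "b-1" "q-b"] nwe_b[of n y 0 b "q-b"] by simp
    qed
    have Eps: "nwe n (ps n y) (p-1) 0 q = E"
      unfolding E_def by (subst (2) pb(1)) simp
    have IH0: "prep (ps n y) (D y) y (pv y (nw n y (p-1-(p-1)) (p-1) (q-1-(p-1)))) - emb (ps n y) (p-1) (Suc (q-1)) L1
        \<in> IS (p-1+(q-1)+1) (ps n y) (nwe n y (p-1) 0 (q-1))"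
      unfolding L1_def by (rule IH) (use top qp y in auto)
    have D0: "pv (ps n y) (D y # Y) - emb (ps n y) (p-1) q L1 \<in> IS (p+q-1) (ps n y) E"
    proof -
      have "nw n y (p-1-(p-1)) (p-1) (q-1-(p-1)) = Y" using top qp by (simp add: Y_def)
      moreover have "Suc (q-1) = q" "p-1+(q-1)+1 = p+q-1" using top qp by auto
      moreover have "Suc (p + q - Suc (Suc 0)) = p + q - Suc 0" using top qp by simp
      ultimately show ?thesis using IH0 unfolding E0 by (simp add: prep_pv)
    qed
    have X1: "pv (ps n y) (D y # U y # D y # Y) - emb (ps n y) p (Suc q) (Ldv y p q L1) \<in> IS (p+q+1) (ps n y) E"
    proof -
      have A: "prep (ps n y) (D y) y (prep y (U y) (ps n y) (pv (ps n y) (D y # Y) - emb (ps n y) (p-1) q L1)) \<in> IS (Suc (Suc (p+q-1))) (ps n y) E"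
        by (rule prep_D_span[OF y prep_U_span[OF y D0]])
      have e: "prep y (U y) (ps n y) (emb (ps n y) (p-1) q L1) = emb y p q L1"
        using emb_prepU[OF y, of L1 "p-1" q] L1supp pb(1) by metis
      have B: "prep (ps n y) (D y) y (emb y p q L1) - emb (ps n y) p (Suc q) (Ldv y p q L1) \<in> IS (p+q+1) (ps n y) E"
      proof (rule LDV_KEY)
        fix c assume c: "c \<le> min p q" "L1 c \<noteq> 0"
        then have "c < p" using L1supp[OF c(2)] top by auto
        then show "prep (ps n y) (D y) y (pv y (nw n y (p-c) c (q-c))) - emb (ps n y) p (Suc q) (LD y p q c) \<in> IS (p+q+1) (ps n y) E"
          unfolding E_def by (intro IH) (use c y top in auto)
      qed
      have l: "Suc (Suc (p+q-1)) = p+q+1" using top by simp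
      have eq: "pv (ps n y) (D y # U y # D y # Y) - emb (ps n y) p (Suc q) (Ldv y p q L1) =
         prep (ps n y) (D y) y (prep y (U y) (ps n y) (pv (ps n y) (D y # Y) - emb (ps n y) (p-1) q L1))
         + (prep (ps n y) (D y) y (emb y p q L1) - emb (ps n y) p (Suc q) (Ldv y p q L1))"
        unfolding prep_diff prep_pv e by simp
      show ?thesis unfolding eq by (rule kq.span_add[OF A[unfolded l] B])
    qed
    have X2: "pv (ps n y) (U (ps n y) # D (ps n y) # D y # Y) - emb (ps n y) p (Suc q) (Ldv (ps n y) (p-1) q L1) \<in> IS (p+q+1) (ps n y) E"
    proof -
      have A: "prep (ps n (ps n y)) (D (ps n y)) (ps n y) (pv (ps n y) (D y # Y) - emb (ps n y) (p-1) q L1) \<in> IS (Suc (p+q-1)) (ps n (ps n y)) E"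
        by (rule prep_D_span[OF psy(1) D0])
      have B: "prep (ps n (ps n y)) (D (ps n y)) (ps n y) (emb (ps n y) (p-1) q L1) - emb (ps n (ps n y)) (p-1) (Suc q) (Ldv (ps n y) (p-1) q L1) \<in> IS (p-1+q+1) (ps n (ps n y)) E"
      proof (rule LDV_KEY)
        fix c assume c: "c \<le> min (p-1) q" "L1 c \<noteq> 0"
        show "prep (ps n (ps n y)) (D (ps n y)) (ps n y) (pv (ps n y) (nw n (ps n y) (p-1-c) c (q-c))) - emb (ps n (ps n y)) (p-1) (Suc q) (LD (ps n y) (p-1) q c) \<in> IS (p-1+q+1) (ps n (ps n y)) E"
          unfolding Eps[symmetric] by (intro IH) (use c psy top in auto)
      qed
      have l: "Suc (p+q-1) = p+q" "p-1+q+1 = p+q" using top by auto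
      have AB: "prep (ps n (ps n y)) (D (ps n y)) (ps n y) (pv (ps n y) (D y # Y) - emb (ps n y) (p-1) q L1)
         + (prep (ps n (ps n y)) (D (ps n y)) (ps n y) (emb (ps n y) (p-1) q L1) - emb (ps n (ps n y)) (p-1) (Suc q) (Ldv (ps n y) (p-1) q L1))
         \<in> IS (p+q) (ps n (ps n y)) E"
        using kq.span_add[OF A[unfolded l(1)] B[unfolded l(2)]] .
      have e: "prep (ps n y) (U (ps n y)) (ps n (ps n y)) (emb (ps n (ps n y)) (p-1) (Suc q) (Ldv (ps n y) (p-1) q L1)) = emb (ps n y) p (Suc q) (Ldv (ps n y) (p-1) q L1)"
        using emb_prepU[OF psy(1), of "Ldv (ps n y) (p-1) q L1" "p-1" "Suc q"] Ldv_supp pb(1)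
        by (metis not_le)
      have eq: "pv (ps n y) (U (ps n y) # D (ps n y) # D y # Y) - emb (ps n y) p (Suc q) (Ldv (ps n y) (p-1) q L1) =
        prep (ps n y) (U (ps n y)) (ps n (ps n y)) (prep (ps n (ps n y)) (D (ps n y)) (ps n y) (pv (ps n y) (D y # Y) - emb (ps n y) (p-1) q L1)
         + (prep (ps n (ps n y)) (D (ps n y)) (ps n y) (emb (ps n y) (p-1) q L1) - emb (ps n (ps n y)) (p-1) (Suc q) (Ldv (ps n y) (p-1) q L1)))"
        unfolding prep_diff prep_add prep_pv e by simp
      have l2: "Suc (p+q) = p+q+1" by simp
      show ?thesis unfolding eq by (rule prep_U_span[OF psy(1) AB, unfolded l2])
    qed
    have G: "pv (ps n y) ([D y, D (pm n y), U (pm n y)] @ Y) + scaleQ (- \<alpha> y) (pv (ps n y) ([D y, U y, D y] @ Y))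
     + scaleQ (- \<beta> y) (pv (ps n y) ([U (ps n y), D (ps n y), D y] @ Y)) \<in> IS (p+q+1) (ps n y) E"
    proof -
      have "walk n y Y = Some (nwe n y 0 (b-1) (q-b))" unfolding Y_def by (rule walk_nw[OF n1 y])
      moreover have "length Y + 3 = p+q+1" using top qp by (simp add: Y_def nw_counts)
      ultimately show ?thesis using gen_B[OF y] unfolding EY by metis
    qed
    have tg: "prep (ps n y) (D y) y (pv y (nw n y (p-b) b (q-b))) - emb (ps n y) p (Suc q) (LD y p q b) =
        (pv (ps n y) ([D y, D (pm n y), U (pm n y)] @ Y) + scaleQ (- \<alpha> y) (pv (ps n y) ([D y, U y, D y] @ Y))
          + scaleQ (- \<beta> y) (pv (ps n y) ([U (ps n y), D (ps n y), D y] @ Y)))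
        + scaleQ (\<alpha> y) (pv (ps n y) (D y # U y # D y # Y) - emb (ps n y) p (Suc q) (Ldv y p q L1))
        + scaleQ (\<beta> y) (pv (ps n y) (U (ps n y) # D (ps n y) # D y # Y) - emb (ps n y) p (Suc q) (Ldv (ps n y) (p-1) q L1))"
      unfolding W0 LDe emb_lin prep_pv by (simp add: kq.scale_right_diff_distrib algebra_simps)
    show ?thesis
      unfolding tg E_def[symmetric] by (rule kq.span_add[OF kq.span_add[OF G kq.span_scale[OF X1]] kq.span_scale[OF X2]])
  qed
qed

end


lemma nwe_D: "n \<ge> 1 \<Longrightarrow> x < n \<Longrightarrow> nwe n x a 0 (Suc c) = nwe n (pm n x) a 0 c"
proof (induction a arbitrary: x)
  case 0
  then show ?case by simp
next
  case (Suc a)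
  have "ps n x < n" using Suc.prems by (simp add: ps_lt)
  then have "nwe n x (Suc a) 0 (Suc c) = nwe n x a 0 c" using Suc.IH[of "ps n x"] Suc.prems by simp
  moreover have "nwe n (pm n x) (Suc a) 0 c = nwe n x a 0 c" using Suc.prems by simp
  ultimately show ?case by simp
qed

lemma walk_end: "n \<ge> 1 \<Longrightarrow> x < n \<Longrightarrow> walk n x w = Some j \<Longrightarrow> j = nwe n x (cu w) 0 (cd w)"
proof (induction w arbitrary: x)
  case Nil
  then show ?case by simp
next
  case (Cons a w)
  show ?case
  proof (cases a)
    case (U i)
    then have i: "i = x" using walk_U_inv[of x n i w] Cons.prems by auto
    then have "walk n (ps n x) w = Some j" using Cons.prems U walk_U by metis
    then have "j = nwe n (ps n x) (cu w) 0 (cd w)" using Cons.IH Cons.prems ps_lt by blast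
    then show ?thesis using U by simp
  next
    case (D i)
    then have i: "i = pm n x" using walk_D_inv[of x n i w] Cons.prems by auto
    then have "walk n (pm n x) w = Some j" using Cons.prems D walk_D by metis
    then have "j = nwe n (pm n x) (cu w) 0 (cd w)" using Cons.IH Cons.prems pm_lt by blast
    then show ?thesis using D Cons.prems nwe_D by simp
  qed
qed

lemma length_cu_cd: "length w = cu w + cd w"
  by (induction w) (auto simp: cu_def cd_def)

context qa1
begin

lemma Nf_Nil: "Nf x [] = dl 0" by (simp add: dl_def fun_eq_iff)

lemma SPAN:
  assumes "x < n" "walk n x w = Some j"
  shows "pv x w - emb x (cu w) (cd w) (Nf x w) \<in> IS (length w) x j"
  using assms
proof (induction w arbitrary: x)
  case Nil
  then have "j = x" by simp
  have e: "emb x 0 0 (dl 0) = pv x []" by (simp add: emb_dl)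
  show ?case unfolding Nf_Nil cu_simps cd_simps \<open>j = x\<close> e diff_self by (rule kq.span_zero)
next
  case (Cons a w)
  have g: "\<And>c. Nf y w c \<noteq> 0 \<Longrightarrow> c \<le> min (cu w) (cd w)" for y using Nf_supp by (meson not_le)
  show ?case
  proof (cases a)
    case (U i)
    then have i: "i = x" using walk_U_inv[of x n i w] Cons.prems by auto
    then have wj: "walk n (ps n x) w = Some j" using Cons.prems U walk_U by metis
    have IH: "pv (ps n x) w - emb (ps n x) (cu w) (cd w) (Nf (ps n x) w) \<in> IS (length w) (ps n x) j"
      by (rule Cons.IH[OF _ wj]) (rule ps_lt[OF n1])
    have eq: "pv x (a # w) - emb x (cu (a # w)) (cd (a # w)) (Nf x (a # w)) = prep x (U x) (ps n x) (pv (ps n x) w - emb (ps n x) (cu w) (cd w) (Nf (ps n x) w))"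
      unfolding U i prep_diff prep_pv by (simp add: emb_prepU[OF Cons.prems(1) g])
    show ?thesis unfolding eq length_Cons by (rule prep_U_span[OF Cons.prems(1) IH])
  next
    case (D i)
    define y where "y = pm n x"
    have y: "y < n" "ps n y = x" using Cons.prems pm_lt n1 by (auto simp: y_def)
    then have i: "i = y" using walk_D_inv[of x n i w] Cons.prems D by (auto simp: y_def)
    then have wj: "walk n y w = Some j" using Cons.prems D walk_D n1 by (metis y_def)
    have IH: "pv y w - emb y (cu w) (cd w) (Nf y w) \<in> IS (length w) y j"
      using Cons.IH[OF y(1) wj] .
    have A: "prep (ps n y) (D y) y (pv y w - emb y (cu w) (cd w) (Nf y w)) \<in> IS (Suc (length w)) (ps n y) j"
      by (rule prep_D_span[OF y(1) IH])
    have je: "j = nwe n y (cu w) 0 (cd w)" using walk_end[OF n1 y(1) wj] .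
    have B: "prep (ps n y) (D y) y (emb y (cu w) (cd w) (Nf y w)) - emb (ps n y) (cu w) (Suc (cd w)) (Ldv y (cu w) (cd w) (Nf y w))
       \<in> IS (cu w + cd w + 1) (ps n y) j"
      unfolding je by (rule LDV_KEY) (rule KEY[OF y(1)], simp)
    have eq: "pv x (a # w) - emb x (cu (a # w)) (cd (a # w)) (Nf x (a # w)) =
       prep (ps n y) (D y) y (pv y w - emb y (cu w) (cd w) (Nf y w)) +
       (prep (ps n y) (D y) y (emb y (cu w) (cd w) (Nf y w)) - emb (ps n y) (cu w) (Suc (cd w)) (Ldv y (cu w) (cd w) (Nf y w)))"
      using y i D by (simp add: prep_diff prep_pv y_def)
    have l: "Suc (length w) = cu w + cd w + 1" by (simp add: length_cu_cd)
    show ?thesis unfolding eq length_Cons using kq.span_add[OF A[unfolded l] B] by (simp only: l y(2))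
  qed
qed

lemma NORM0: "x < n \<Longrightarrow> Nf x (nw n x 0 0 c) = dl 0"
proof (induction c arbitrary: x)
  case 0
  then show ?case by (simp add: dl_def fun_eq_iff)
next
  case (Suc c)
  have "pm n x < n" using pm_lt n1 by auto
  then have ih: "Nf (pm n x) (nw n (pm n x) 0 0 c) = dl 0" using Suc.IH by blast
  have "Nf x (nw n x 0 0 (Suc c)) = Ldv (pm n x) 0 c (Nf (pm n x) (nw n (pm n x) 0 0 c))"
    by (simp add: nw_counts)
  also have "\<dots> = Ldv (pm n x) 0 c (dl 0)" unfolding ih ..
  also have "\<dots> = LD (pm n x) 0 c 0" by (rule Ldv_dl) simp
  also have "\<dots> = dl 0" by (simp add: LD_00 dl_def fun_eq_iff)
  finally show ?case .
qed

lemma NORM1: "x < n \<Longrightarrow> Nf x (nw n x 0 b c) = dl b"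
proof (induction b arbitrary: x)
  case 0
  then show ?case by (rule NORM0)
next
  case (Suc b)
  have "Nf x (nw n x 0 (Suc b) c) = Ldv (pm n x) (Suc b) (b + c) (Nf (ps n (pm n x)) (nw n x 0 b c))"
    by (simp add: nw_counts)
  also have "\<dots> = Ldv (pm n x) (Suc b) (b + c) (dl b)" using Suc by simp
  also have "\<dots> = LD (pm n x) (Suc b) (b + c) b" by (rule Ldv_dl) simp
  also have "\<dots> = dl (Suc b)" by (simp add: LD_a1 dl_def fun_eq_iff)
  finally show ?case .
qed

lemma NORM: "x < n \<Longrightarrow> Nf x (nw n x a b c) = dl b"
proof (induction a arbitrary: x)
  case 0
  then show ?case by (rule NORM1)
next
  case (Suc a)
  have "ps n x < n" using ps_lt n1 by auto
  then show ?case using Suc.IH by simp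
qed

end


lemma walk_append: "walk n x (u @ v) = (case walk n x u of None \<Rightarrow> None | Some y \<Rightarrow> walk n y v)"
  by (induction u arbitrary: x) auto

lemma walk_arr_ok: "walk n x w \<noteq> None \<Longrightarrow> a \<in> set w \<Longrightarrow> arr_ok n a"
  by (induction w arbitrary: x) (auto split: if_splits)

lemma walk_D2: "n \<ge> 1 \<Longrightarrow> i < n \<Longrightarrow> walk n (ps n i) (D i # w) = walk n i w"
  by (simp add: arr_ok_def src_def tgt_def ps_def)

lemma finite_PS: "finite {w. is_path n i w j \<and> length w = k}"
proof -
  have A: "finite {a. arr_ok n a}"
  proof -
    have "{a. arr_ok n a} \<subseteq> U ` {..<n} \<union> D ` {..<n}"
    proof
      fix a assume "a \<in> {a. arr_ok n a}"
      then show "a \<in> U ` {..<n} \<union> D ` {..<n}" by (cases a) (auto simp: arr_ok_def)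
    qed
    then show ?thesis by (rule finite_subset) auto
  qed
  have "{w. is_path n i w j \<and> length w = k} \<subseteq> {xs. set xs \<subseteq> {a. arr_ok n a} \<and> length xs = k}"
    by (auto simp: is_path_def intro: walk_arr_ok)
  then show ?thesis by (rule finite_subset) (rule finite_lists_length_eq[OF A])
qed

lemma nw_tw: "length (takeWhile isU (nw n x a b c)) = a"
  by (induction n x a b c rule: nw.induct) (auto simp: isU_def)

lemma nw_inj: "nw n x a b c = nw n x a' b' c' \<Longrightarrow> a = a' \<and> b = b' \<and> c = c'"
proof -
  assume e: "nw n x a b c = nw n x a' b' c'"
  have "a = a'" using nw_tw[of n x a b c] nw_tw[of n x a' b' c'] e by simp
  moreover have "a + b = a' + b'" using nw_counts(1)[of n x a b c] nw_counts(1)[of n x a' b' c'] e by simp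
  moreover have "b + c = b' + c'" using nw_counts(2)[of n x a b c] nw_counts(2)[of n x a' b' c'] e by simp
  ultimately show ?thesis by simp
qed

lemma indep_coord:
  assumes "\<And>x. x \<in> S \<Longrightarrow> \<exists>z. x z \<noteq> 0 \<and> (\<forall>y\<in>S. y \<noteq> x \<longrightarrow> y z = 0)"
  shows "kq.independent (S :: 'k::field kQ set)"
  unfolding kq.dependent_def
proof clarify
  fix a assume a: "a \<in> S" "a \<in> kq.span (S - {a})"
  obtain z where z: "a z \<noteq> 0" "\<forall>y\<in>S. y \<noteq> a \<longrightarrow> y z = 0" using assms a(1) by blast
  have "f z = 0" if "f \<in> kq.span (S - {a})" for f
    using that
  proof (induction rule: kq.span_induct_alt)
    case base
    then show ?case by simp
  next
    case (step c x y)
    then show ?case using z by (simp add: scaleQ_apply)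
  qed
  then show False using a z by auto
qed

definition NW :: "nat \<Rightarrow> nat \<Rightarrow> arr list set" where "NW n i = {w. \<exists>a b c. w = nw n i a b c}"

definition s3 :: "nat \<Rightarrow> nat" where "s3 k = (\<Sum>b\<le>k div 2. k - 2*b + 1)"

lemma count_NW:
  assumes n1: "n \<ge> 1" and i: "i < n"
  shows "(\<Sum>j<n. card ({w. is_path n i w j \<and> length w = k} \<inter> NW n i)) = s3 k"
proof -
  define A where "A j = {w. is_path n i w j \<and> length w = k} \<inter> NW n i" for j
  define B where "B = {w \<in> NW n i. length w = k}"
  define T where "T = (SIGMA b:{..k div 2}. {..k - 2*b})"
  define f where "f = (\<lambda>(b, a). nw n i a b (k - 2*b - a))"
  have U: "(\<Union>j\<in>{..<n}. A j) = B"
  proof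
    show "(\<Union>j\<in>{..<n}. A j) \<subseteq> B" by (auto simp: A_def B_def)
  next
    show "B \<subseteq> (\<Union>j\<in>{..<n}. A j)"
    proof
      fix w assume "w \<in> B"
      then obtain a b c where w: "w = nw n i a b c" "length w = k" by (auto simp: B_def NW_def)
      have "walk n i w = Some (nwe n i a b c)" "nwe n i a b c < n"
        using walk_nw[OF n1 i] nwe_lt[OF n1 i] w by auto
      then show "w \<in> (\<Union>j\<in>{..<n}. A j)" using w i by (auto simp: A_def is_path_def NW_def)
    qed
  qed
  have "(\<Sum>j<n. card (A j)) = card (\<Union>j\<in>{..<n}. A j)"
  proof (rule card_UN_disjoint[symmetric])
    show "finite {..<n}" by simp
    show "\<forall>j\<in>{..<n}. finite (A j)" using finite_PS by (auto simp: A_def)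
    show "\<forall>j\<in>{..<n}. \<forall>j'\<in>{..<n}. j \<noteq> j' \<longrightarrow> A j \<inter> A j' = {}"
      by (auto simp: A_def is_path_def)
  qed
  also have "\<dots> = card B" using U by simp
  also have "B = f ` T"
  proof
    show "B \<subseteq> f ` T"
    proof
      fix w assume "w \<in> B"
      then obtain a b c where w: "w = nw n i a b c" "length w = k" by (auto simp: B_def NW_def)
      then have l: "a + 2 * b + c = k" by (simp add: nw_counts)
      then have "(b, a) \<in> T" "c = k - 2*b - a" by (auto simp: T_def)
      then show "w \<in> f ` T" using w by (auto simp: f_def image_iff intro!: bexI[of _ "(b,a)"])
    qed
  next
    show "f ` T \<subseteq> B"
      by (auto simp: f_def T_def B_def NW_def nw_counts)
  qed
  also have "card (f ` T) = card T"
  proof (rule card_image)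
    show "inj_on f T"
      unfolding inj_on_def f_def by (auto dest: nw_inj)
  qed
  also have "card T = s3 k"
    unfolding T_def s3_def by (subst card_SigmaI) auto
  finally show ?thesis by (simp add: A_def)
qed


context qa1
begin

lemma pend_walk: "x < n \<Longrightarrow> walk n x w = Some y \<Longrightarrow> pend x w = y"
proof (induction w arbitrary: x)
  case Nil
  then show ?case by simp
next
  case (Cons a w)
  show ?case
  proof (cases a)
    case (U i)
    then have "i = x" using walk_U_inv[of x n i w] Cons.prems by auto
    then have "walk n (ps n x) w = Some y" using Cons.prems U walk_U by metis
    then show ?thesis using Cons.IH[of "ps n x"] U ps_lt n1 by simp
  next
    case (D i)
    then have "i = pm n x" using walk_D_inv[of x n i w] Cons.prems by auto
    then have "walk n (pm n x) w = Some y" using Cons.prems D walk_D n1 by metis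
    then show ?thesis using Cons.IH[of "pm n x"] D pm_lt n1 by simp
  qed
qed

lemma sandwich3p: "sandwich i pp [(c1,t1),(c2,t2),(c3,t3)] qq =
   scaleQ c1 (pv i (pp @ t1 @ qq)) + scaleQ c2 (pv i (pp @ t2 @ qq)) + scaleQ c3 (pv i (pp @ t3 @ qq))"
  by (auto simp: fun_eq_iff sandwich_def pv_def pvec_def scaleQ_apply)

lemma emb_lin3: "emb x p q (\<lambda>c. a1 * g1 c + a2 * g2 c + a3 * g3 c) =
   scaleQ a1 (emb x p q g1) + scaleQ a2 (emb x p q g2) + scaleQ a3 (emb x p q g3)"
  unfolding emb_def by (simp add: kq.scale_left_distrib sum.distrib kq.scale_sum_right)

lemma emb_zero: "emb x p q (\<lambda>_. 0) = 0"
  unfolding emb_def by simp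

lemma emb_eval: "w \<notin> NW n i \<Longrightarrow> emb i p q g (i, w) = 0"
  unfolding emb_def by (auto simp: sum_fun_apply scaleQ_apply pv_def pvec_def NW_def intro!: sum.neutral)

lemma block:
  assumes i: "i < n"
  shows "hilb_entry n (rels n \<alpha> \<beta>) k i j = card ({w. is_path n i w j \<and> length w = k} \<inter> NW n i)"
proof -
  define PS where "PS = {w. is_path n i w j \<and> length w = k}"
  define gv where "gv w = pv i w - emb i (cu w) (cd w) (Nf i w)" for w
  define G where "G = gv ` (PS - NW n i)"
  have finPS: "finite PS" unfolding PS_def by (rule finite_PS)
  have P_eq: "paths_deg n k i j = pv i ` PS"
    by (auto simp: paths_deg_def PS_def pv_def)
  have pv_eval: "pv i w (i, w') = (if w = w' then 1 else 0)" for w w'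
    by (auto simp: pv_def pvec_def)
  have injpv: "inj_on (pv i) PS"
  proof (rule inj_onI)
    fix w w' assume "pv i w = pv i w'"
    then have "pv i w (i, w) = pv i w' (i, w)" by simp
    then show "w = w'" by (simp add: pv_eval split: if_splits)
  qed
  have indP: "kq.independent (pv i ` PS)"
  proof (rule indep_coord)
    fix x assume "x \<in> pv i ` PS"
    then obtain w where w: "x = pv i w" by auto
    show "\<exists>z. x z \<noteq> 0 \<and> (\<forall>y\<in>pv i ` PS. y \<noteq> x \<longrightarrow> y z = 0)"
      by (rule exI[of _ "(i, w)"]) (auto simp: w pv_eval)
  qed
  have dimP: "dimQ (paths_deg n k i j :: 'k kQ set) = card PS"
    unfolding dimQ_kq P_eq kq.dim_eq_card_independent[OF indP] card_image[OF injpv] ..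
  have gv_self: "gv w (i, w) = 1" if "w \<notin> NW n i" for w
    using that by (simp add: gv_def emb_eval pv_eval)
  have gv_other: "gv w' (i, w) = 0" if "w \<notin> NW n i" "w' \<noteq> w" for w w'
    using that by (simp add: gv_def emb_eval pv_eval)
  have injG: "inj_on gv (PS - NW n i)"
  proof (rule inj_onI)
    fix w w' assume w: "w \<in> PS - NW n i" "w' \<in> PS - NW n i" and e: "gv w = gv w'"
    show "w = w'"
    proof (rule ccontr)
      assume "w \<noteq> w'"
      then have "gv w' (i, w) = 0" using gv_other w by auto
      moreover have "gv w (i, w) = 1" using gv_self w by auto
      ultimately show False using e by simp
    qed
  qed
  have indG: "kq.independent G"
  proof (rule indep_coord)
    fix x assume "x \<in> G"
    then obtain w where w: "x = gv w" "w \<in> PS - NW n i" by (auto simp: G_def)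
    show "\<exists>z. x z \<noteq> 0 \<and> (\<forall>y\<in>G. y \<noteq> x \<longrightarrow> y z = 0)"
    proof (rule exI[of _ "(i, w)"], intro conjI ballI impI)
      show "x (i, w) \<noteq> 0" using w gv_self by simp
    next
      fix y assume "y \<in> G" "y \<noteq> x"
      then obtain w' where "y = gv w'" "w' \<noteq> w" using w by (auto simp: G_def)
      then show "y (i, w) = 0" using gv_other w by simp
    qed
  qed
  have gv_normal: "gv w = 0" if wN: "w \<in> NW n i" for w
  proof -
    obtain a b c where w: "w = nw n i a b c" using wN by (auto simp: NW_def)
    have "emb i (a + b) (b + c) (dl b) = pv i (nw n i (a + b - b) b (b + c - b))" by (rule emb_dl) simp
    then show ?thesis by (simp add: gv_def w nw_counts NORM[OF i])
  qed
  have gv_in: "gv w \<in> kq.span G" if "w \<in> PS" for w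
  proof (cases "w \<in> NW n i")
    case True
    then show ?thesis using gv_normal by (simp add: kq.span_zero)
  next
    case False
    then show ?thesis using that by (auto simp: G_def intro: kq.span_base)
  qed
  have comb3: "scaleQ c1 (pv i w1) + scaleQ c2 (pv i w2) + scaleQ c3 (pv i w3) \<in> kq.span G"
    if "w1 \<in> PS" "w2 \<in> PS" "w3 \<in> PS" "cu w1 = cu w2" "cu w1 = cu w3" "cd w1 = cd w2" "cd w1 = cd w3"
      "\<And>b'. c1 * Nf i w1 b' + c2 * Nf i w2 b' + c3 * Nf i w3 b' = 0" for c1 c2 c3 w1 w2 w3
  proof -
    have pe: "pv i w = gv w + emb i (cu w) (cd w) (Nf i w)" for w by (simp add: gv_def)
    have "emb i (cu w1) (cd w1) (\<lambda>c. c1 * Nf i w1 c + c2 * Nf i w2 c + c3 * Nf i w3 c) = 0"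
      using that(8) emb_zero by simp
    then have "scaleQ c1 (pv i w1) + scaleQ c2 (pv i w2) + scaleQ c3 (pv i w3) =
        scaleQ c1 (gv w1) + scaleQ c2 (gv w2) + scaleQ c3 (gv w3)"
      unfolding pe emb_lin3 using that(4-7) by (simp add: kq.scale_right_distrib algebra_simps)
    also have "\<dots> \<in> kq.span G"
      using gv_in that(1-3) by (intro kq.span_add kq.span_scale) auto
    finally show ?thesis .
  qed
  have spanEq: "kq.span (ideal_deg n (rels n \<alpha> \<beta>) k i j) = kq.span G"
  proof (rule kq.span_eq[THEN iffD2], rule conjI)
    show "G \<subseteq> kq.span (ideal_deg n (rels n \<alpha> \<beta>) k i j)"
    proof
      fix x assume "x \<in> G"
      then obtain w where w: "x = gv w" "w \<in> PS" by (auto simp: G_def)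
      then have wj: "walk n i w = Some j" and lk: "length w = k" by (auto simp: PS_def is_path_def)
      have "gv w \<in> IS (length w) i j" unfolding gv_def by (rule SPAN[OF i wj])
      then show "x \<in> kq.span (ideal_deg n (rels n \<alpha> \<beta>) k i j)"
        using lk w by simp
    qed
  next
    show "ideal_deg n (rels n \<alpha> \<beta>) k i j \<subseteq> kq.span G"
    proof
      fix s assume "s \<in> ideal_deg n (rels n \<alpha> \<beta>) k i j"
      then obtain pp qq aa bb ts where s: "s = sandwich i pp ts qq" and
        r: "(aa, bb, ts) \<in> rels n \<alpha> \<beta>" "is_path n i pp aa" "is_path n bb qq j"
        "length pp + length (snd (hd ts)) + length qq = k"
        unfolding ideal_deg_def by blast
      have wpp: "walk n i pp = Some aa" and wqq: "walk n bb qq = Some j" using r by (auto simp: is_path_def)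
      have pend: "pend i pp = aa" using pend_walk[OF i wpp] .
      from r(1) obtain i' where i': "i' < n" and rr: "(aa, bb, ts) = relA n \<alpha> \<beta> i' \<or> (aa, bb, ts) = relB n \<alpha> \<beta> i'"
        unfolding rels_def by auto
      have psi: "ps n i' < n" "pm n i' < n" using ps_lt pm_lt n1 by auto
      from rr show "s \<in> kq.span G"
      proof
        assume e: "(aa, bb, ts) = relA n \<alpha> \<beta> i'"
        then have abt: "aa = i'" "bb = ps n i'" "ts = [(1, [D (pm n i'), U (pm n i'), U i']), (- \<alpha> i', [U i', D i', U i']),
            (- \<beta> i', [U i', U (ps n i'), D (ps n i')])]" by (auto simp: relA_def)
        have inPS: "pp @ t @ qq \<in> PS" if "walk n i' t = Some (ps n i')" "length t = 3" for t
          using that r wpp wqq abt i by (simp add: PS_def is_path_def walk_append)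
        show ?thesis unfolding s abt(3) sandwich3p
        proof (rule comb3)
          show "pp @ [D (pm n i'), U (pm n i'), U i'] @ qq \<in> PS"
            by (rule inPS) (use i' psi n1 in \<open>simp_all add: walk_D walk_U del: walk.simps(2)\<close>)
          show "pp @ [U i', D i', U i'] @ qq \<in> PS"
            by (rule inPS) (use i' psi n1 in \<open>simp_all add: walk_D2 walk_U del: walk.simps(2)\<close>)
          show "pp @ [U i', U (ps n i'), D (ps n i')] @ qq \<in> PS"
            by (rule inPS) (use i' psi n1 in \<open>simp_all add: walk_D2 walk_U del: walk.simps(2)\<close>)
          show "\<And>b'. 1 * Nf i (pp @ [D (pm n i'), U (pm n i'), U i'] @ qq) b' + - \<alpha> i' * Nf i (pp @ [U i', D i', U i'] @ qq) b' +
             - \<beta> i' * Nf i (pp @ [U i', U (ps n i'), D (ps n i')] @ qq) b' = 0"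
            by (rule Nf_kill_ext) (simp, simp, simp, simp, unfold pend abt(1), rule kill_A[OF i'])
        qed simp_all
      next
        assume e: "(aa, bb, ts) = relB n \<alpha> \<beta> i'"
        then have abt: "aa = ps n i'" "bb = i'" "ts = [(1, [D i', D (pm n i'), U (pm n i')]), (- \<alpha> i', [D i', U i', D i']),
            (- \<beta> i', [U (ps n i'), D (ps n i'), D i'])]" by (auto simp: relB_def)
        have inPS: "pp @ t @ qq \<in> PS" if "walk n (ps n i') t = Some i'" "length t = 3" for t
          using that r wpp wqq abt i by (simp add: PS_def is_path_def walk_append)
        show ?thesis unfolding s abt(3) sandwich3p
        proof (rule comb3)
          show "pp @ [D i', D (pm n i'), U (pm n i')] @ qq \<in> PS"
            by (rule inPS) (use i' psi n1 in \<open>simp_all add: walk_D walk_D2 walk_U del: walk.simps(2)\<close>)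
          show "pp @ [D i', U i', D i'] @ qq \<in> PS"
            by (rule inPS) (use i' psi n1 in \<open>simp_all add: walk_D2 walk_U del: walk.simps(2)\<close>)
          show "pp @ [U (ps n i'), D (ps n i'), D i'] @ qq \<in> PS"
            by (rule inPS) (use i' psi n1 in \<open>simp_all add: walk_D2 walk_U del: walk.simps(2)\<close>)
          show "\<And>b'. 1 * Nf i (pp @ [D i', D (pm n i'), U (pm n i')] @ qq) b' + - \<alpha> i' * Nf i (pp @ [D i', U i', D i'] @ qq) b' +
             - \<beta> i' * Nf i (pp @ [U (ps n i'), D (ps n i'), D i'] @ qq) b' = 0"
            by (rule Nf_kill_ext) (simp, simp, simp, simp, unfold pend abt(1), rule kill_B[OF i'])
        qed simp_all
      qed
    qed
  qed
  have dimI: "dimQ (ideal_deg n (rels n \<alpha> \<beta>) k i j) = card (PS - NW n i)"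
  proof -
    have "dimQ (ideal_deg n (rels n \<alpha> \<beta>) k i j) = kq.dim (kq.span (ideal_deg n (rels n \<alpha> \<beta>) k i j))"
      by (simp add: dimQ_kq)
    also have "\<dots> = kq.dim (kq.span G)" unfolding spanEq ..
    also have "\<dots> = card G" by (simp add: kq.dim_eq_card_independent[OF indG])
    also have "\<dots> = card (PS - NW n i)" unfolding G_def by (rule card_image[OF injG])
    finally show ?thesis .
  qed
  have "card (PS - NW n i) = card PS - card (PS \<inter> NW n i)"
    by (rule card_Diff_subset_Int) (use finPS in auto)
  moreover have "card (PS \<inter> NW n i) \<le> card PS" by (rule card_mono[OF finPS]) auto
  ultimately show ?thesis
    unfolding hilb_entry_def dimP dimI PS_def[symmetric] by simp
qed

end

lemma s3_rec: "s3 (k+2) = s3 k + (k+3)"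
proof -
  have "(k+2) div 2 = Suc (k div 2)" by simp
  then have "s3 (k+2) = (\<Sum>b\<le>Suc (k div 2). k + 2 - 2*b + 1)" by (simp add: s3_def)
  also have "\<dots> = (k + 3) + (\<Sum>b\<le>k div 2. k + 2 - 2*Suc b + 1)"
    by (subst sum.atMost_Suc_shift) simp
  also have "(\<Sum>b\<le>k div 2. k + 2 - 2*Suc b + 1) = s3 k"
    unfolding s3_def by (rule sum.cong) auto
  finally show ?thesis by simp
qed

lemma s3_small: "s3 0 = 1" "s3 (Suc 0) = 2" by (auto simp: s3_def)

lemma fps_s3: "inverse ((1 - fps_X) ^ 2 * (1 - fps_X ^ 2) :: rat fps) = Abs_fps (\<lambda>k. of_nat (s3 k))"
proof (rule fps_inverse_unique)
  define F :: "rat fps" where "F = Abs_fps (\<lambda>k. of_nat (s3 k))"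
  define G :: "rat fps" where "G = Abs_fps (\<lambda>k. of_nat (k + 1))"
  have FG: "F * (1 - fps_X ^ 2) = G"
  proof (rule fps_ext)
    fix k
    have "fps_nth (F * (1 - fps_X ^ 2)) k = fps_nth F k - fps_nth (fps_X ^ 2 * F) k"
      by (simp add: algebra_simps)
    also have "\<dots> = of_nat (k + 1)"
    proof (cases "k < 2")
      case True
      then have "k = 0 \<or> k = 1" by auto
      then show ?thesis using True by (auto simp: F_def fps_X_power_mult_nth s3_small)
    next
      case False
      then obtain m where m: "k = m + 2" by (metis add.commute le_Suc_ex not_less)
      have "s3 (Suc (Suc m)) = s3 m + (m + 3)" using s3_rec[of m] by simp
      then show ?thesis using m by (simp add: F_def fps_X_power_mult_nth)
    qed
    finally show "fps_nth (F * (1 - fps_X ^ 2)) k = fps_nth G k" by (simp add: G_def)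
  qed
  have G1: "G * (1 - fps_X) ^ 2 = 1"
  proof (rule fps_ext)
    fix k
    have e: "(1 - fps_X) ^ 2 = (1 :: rat fps) - fps_X - fps_X + fps_X ^ 2"
      by (simp add: power2_eq_square algebra_simps)
    have "fps_nth (G * (1 - fps_X) ^ 2) k = fps_nth G k - fps_nth (fps_X * G) k - fps_nth (fps_X * G) k + fps_nth (fps_X ^ 2 * G) k"
    proof -
      have "G * (1 - fps_X) ^ 2 = G - fps_X * G - fps_X * G + fps_X ^ 2 * G"
        unfolding e by (simp add: ring_distribs mult.commute)
      then show ?thesis by (simp only: fps_sub_nth fps_add_nth)
    qed
    also have "\<dots> = (if k = 0 then 1 else 0)"
    proof (cases "k < 2")
      case True
      then have "k = 0 \<or> k = 1" by auto
      then show ?thesis using True by (auto simp: G_def fps_X_power_mult_nth)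
    next
      case False
      then obtain m where m: "k = m + 2" by (metis add.commute le_Suc_ex not_less)
      then show ?thesis by (simp add: G_def fps_X_power_mult_nth algebra_simps)
    qed
    finally show "fps_nth (G * (1 - fps_X) ^ 2) k = fps_nth (1 :: rat fps) k" by simp
  qed
  show "(1 - fps_X) ^ 2 * (1 - fps_X ^ 2) * Abs_fps (\<lambda>k. of_nat (s3 k)) = (1 :: rat fps)"
    using FG G1 unfolding F_def[symmetric] by (metis mult.commute mult.left_commute)
qed


theorem corollary1p3:
  fixes n :: nat and \<alpha> \<beta> :: "nat \<Rightarrow> 'k::field_char_0"
  assumes "alg_closed TYPE('k)" and "n \<ge> 1"
  shows "hilb_tot n (rels n \<alpha> \<beta>) =
    of_nat n * inverse ((1 - fps_X) ^ 2 * (1 - fps_X ^ 2))"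
proof -
  interpret qa1 n \<alpha> \<beta> by unfold_locales (rule assms(2))
  have coef: "(\<Sum>i<n. \<Sum>j<n. hilb_entry n (rels n \<alpha> \<beta>) k i j) = n * s3 k" for k
  proof -
    have "(\<Sum>i<n. \<Sum>j<n. hilb_entry n (rels n \<alpha> \<beta>) k i j) =
        (\<Sum>i<n. \<Sum>j<n. card ({w. is_path n i w j \<and> length w = k} \<inter> NW n i))"
      by (rule sum.cong) (auto intro!: sum.cong block)
    also have "\<dots> = (\<Sum>i<n. s3 k)"
      by (rule sum.cong) (auto intro: count_NW[OF assms(2)])
    finally show ?thesis by simp
  qed
  have "hilb_tot n (rels n \<alpha> \<beta>) = of_nat n * Abs_fps (\<lambda>k. of_nat (s3 k))"
  proof (rule fps_ext)
    fix k
    show "fps_nth (hilb_tot n (rels n \<alpha> \<beta>)) k = fps_nth (of_nat n * Abs_fps (\<lambda>k. of_nat (s3 k))) k"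
      unfolding hilb_tot_def coef fps_of_nat[symmetric] fps_mult_left_const_nth by simp
  qed
  then show ?thesis using fps_s3 by simp
qed

end
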